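(* Let $k$ be a field, $A=kQ_A/I_A$ a monomial algebra with vertices $e_1,\dots,e_n$, and $B$ the algebra obtained by gluing the distinct non-isolated vertices $e_1,e_n$. Then there is a decomposition of $k$-vector spaces $\mathrm{Ker}(\delta^0_{(B)_{\ge1}})=\psi_0(\mathrm{Ker}(\delta^0_{(A)_{\ge1}}))\oplus Z_{nsp}$. In particular, if $e_1,e_n$ lie in the same block, then $\dim_k\mathrm{Ker}(\delta^0_{(B)_{\ge1}})=\dim_k\mathrm{Ker}(\delta^0_{(A)_{\ge1}})+\mathrm{nsp}(1,n)$; if they lie in different blocks, then $\dim_k\mathrm{Ker}(\delta^0_{(B)_{\ge1}})=\dim_k\mathrm{Ker}(\delta^0_{(A)_{\ge1}})$.
   Context: Monomial algebra: $A=kQ_A/I_A$, $Q_A$ finite quiver, $I_A$ admissible, generated by a minimal set $Z_A$ of paths of length $\ge2$; $\mathcal B_A$: paths (including trivial ones) avoiding elements of $Z_A$ as subpaths; $(\mathcal B_A)_{\ge1}$ those of length $\ge1$. Gluing: $B\subseteq A$ generated by $f_1=e_1+e_n$, $f_i=e_i$ ($2\le i\le n-1$) and all arrows; $B\cong kQ_B/I_B$, $Q_B$ obtained by identifying $e_1,e_n$ to $f_1$ (arrow $\alpha\mapsto\alpha^*$, path $p=a_m\cdots a_1\mapsto p^*=a_m^*\cdots a_1^*$, $e_i^*=f_i$, $e_1^*=e_n^*=f_1$), $I_B$ generated by $\{r^*:r\in Z_A\}$ and the paths $b^*c^*$ with $b,c$ arrows, $t(c),s(b)\in\{e_1,e_n\}$,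 $t(c)\ne s(b)$; $\mathcal B_B$ its basis paths. Blocks correspond to connected components of $Q_A$. For path sets $X,Y$, $k(X\|Y)$ has basis the pairs $x\|y$ of parallel paths. For monomial $\Lambda=kQ/\langle Z\rangle$ with basis paths $\mathcal B$, $\delta^0:k(Q_0\|\mathcal B)\to k(Q_1\|\mathcal B)$, $e\|\gamma\mapsto\sum_{a\in Q_1,s(a)=e,a\gamma\in\mathcal B}a\|a\gamma-\sum_{a\in Q_1,t(a)=e,\gamma a\in\mathcal B}a\|\gamma a$; $\delta^0_{(A)_{\ge1}}$ is the restriction of $\delta^0_A$ to $k((Q_A)_0\|(\mathcal B_A)_{\ge1})$, similarly for $B$. $\psi_0:k((Q_A)_0\|\mathcal B_A)\to k((Q_B)_0\|\mathcal B_B)$, $e\|p\mapsto e^*\|p^*$. A non-special path is a path $p\in\mathcal B_A$ from $e_1$ to $e_n$ or from $e_n$ to $e_1$ such that $ap\in I_A$ and $pb\in I_A$ for all arrows $a,b$ (equivalently $\delta^0_B(f_1\|p^* )=0$); $\mathrm{nsp}(1,n)$ is their number, and $Z_{nsp}$ is the span of the elements $f_1\|p^*$ over non-special paths $p$. *)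

theory Defs
  imports Complex_Main "HOL-Library.Sublist" "HOL-Library.Function_Algebras"
begin

record ('v, 'a) quiver =
  verts :: "'v set"
  arrs  :: "'a set"
  src   :: "'a \<Rightarrow> 'v"
  tgt   :: "'a \<Rightarrow> 'v"

text \<open>A path is a start vertex together with the list of its arrows in the order
  in which they are traversed: the path a_m...a_1 (a_1 first) is (s(a_1), [a_1,...,a_m]);
  the trivial path e_v is (v, []).\<close>
type_synonym ('v, 'a) path = "'v \<times> 'a list"

definition path_end :: "('v, 'a) quiver \<Rightarrow> ('v, 'a) path \<Rightarrow> 'v" where
  "path_end Q p = (if snd p = [] then fst p else tgt Q (last (snd p)))"

fun arrow_chain :: "('v, 'a) quiver \<Rightarrow> 'v \<Rightarrow> 'a list \<Rightarrow> bool" where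
  "arrow_chain Q v [] = True"
| "arrow_chain Q v (a # as) = (a \<in> arrs Q \<and> src Q a = v \<and> arrow_chain Q (tgt Q a) as)"

definition is_path :: "('v, 'a) quiver \<Rightarrow> ('v, 'a) path \<Rightarrow> bool" where
  "is_path Q p \<longleftrightarrow> fst p \<in> verts Q \<and> arrow_chain Q (fst p) (snd p)"

definition path_len :: "('v, 'a) path \<Rightarrow> nat" where
  "path_len p = length (snd p)"

text \<open>post_arr a g is the product a g (first g, then a);
  pre_arr Q g a is the product g a (first a, then g).
  They are genuine paths exactly when composable.\<close>
definition post_arr :: "'a \<Rightarrow> ('v, 'a) path \<Rightarrow> ('v, 'a) path" where
  "post_arr a g = (fst g, snd g @ [a])"

definition pre_arr :: "('v, 'a) quiver \<Rightarrow> ('v, 'a) path \<Rightarrow> 'a \<Rightarrow> ('v, 'a) path" where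
  "pre_arr Q g a = (src Q a, a # snd g)"

definition non_isolated :: "('v, 'a) quiver \<Rightarrow> 'v \<Rightarrow> bool" where
  "non_isolated Q v \<longleftrightarrow> (\<exists>a\<in>arrs Q. src Q a = v \<or> tgt Q a = v)"

text \<open>Blocks of A = connected components of the (underlying graph of the) quiver.\<close>
definition same_block :: "('v, 'a) quiver \<Rightarrow> 'v \<Rightarrow> 'v \<Rightarrow> bool" where
  "same_block Q v w \<longleftrightarrow>
     (v, w) \<in> ({(src Q a, tgt Q a) | a. a \<in> arrs Q} \<union> {(tgt Q a, src Q a) | a. a \<in> arrs Q})\<^sup>*"

text \<open>A (genuine) path lies in the ideal generated by Z iff it contains an element of Z
  as a subpath.\<close>
definition contains_rel :: "('v, 'a) path set \<Rightarrow> ('v, 'a) path \<Rightarrow> bool" where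
  "contains_rel Z p \<longleftrightarrow> (\<exists>r\<in>Z. sublist (snd r) (snd p))"

text \<open>kQ/<Z> is a monomial algebra: Q a finite quiver, Z a minimal set of paths of
  length at least 2 generating an admissible ideal (all long paths lie in the ideal).\<close>
definition monomial_data :: "('v, 'a) quiver \<Rightarrow> ('v, 'a) path set \<Rightarrow> bool" where
  "monomial_data Q Z \<longleftrightarrow>
     finite (verts Q) \<and> finite (arrs Q) \<and>
     (\<forall>a\<in>arrs Q. src Q a \<in> verts Q \<and> tgt Q a \<in> verts Q) \<and>
     (\<forall>r\<in>Z. is_path Q r \<and> path_len r \<ge> 2) \<and>
     (\<forall>r\<in>Z. \<forall>r'\<in>Z. sublist (snd r) (snd r') \<longrightarrow> r = r') \<and>
     (\<exists>N. \<forall>p. is_path Q p \<and> path_len p \<ge> N \<longrightarrow> contains_rel Z p)"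

definition basis_paths :: "('v, 'a) quiver \<Rightarrow> ('v, 'a) path set \<Rightarrow> ('v, 'a) path set" where
  "basis_paths Q Z = {p. is_path Q p \<and> \<not> contains_rel Z p}"

text \<open>Elements of k(X || Y) are represented as k-valued functions on pairs, vanishing
  outside the set of parallel pairs.\<close>
definition VP :: "('v, 'a) quiver \<Rightarrow> ('v, 'a) path set \<Rightarrow> ('v \<times> ('v, 'a) path) set" where
  "VP Q Bs = {(e, g). e \<in> verts Q \<and> g \<in> Bs \<and> fst g = e \<and> path_end Q g = e}"

definition VP_ge1 :: "('v, 'a) quiver \<Rightarrow> ('v, 'a) path set \<Rightarrow> ('v \<times> ('v, 'a) path) set" where
  "VP_ge1 Q Bs = {(e, g) \<in> VP Q Bs. path_len g \<ge> 1}"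

definition AP :: "('v, 'a) quiver \<Rightarrow> ('v, 'a) path set \<Rightarrow> ('a \<times> ('v, 'a) path) set" where
  "AP Q Bs = {(a, q). a \<in> arrs Q \<and> q \<in> Bs \<and> fst q = src Q a \<and> path_end Q q = tgt Q a}"

definition delta0 :: "('v, 'a) quiver \<Rightarrow> ('v, 'a) path set
      \<Rightarrow> ('v \<times> ('v, 'a) path \<Rightarrow> 'k::field) \<Rightarrow> ('a \<times> ('v, 'a) path \<Rightarrow> 'k)" where
  "delta0 Q Bs f = (\<lambda>(a, q). if (a, q) \<in> AP Q Bs then
      (\<Sum>(e, g)\<in>VP Q Bs. f (e, g) *
         ((if src Q a = e \<and> post_arr a g \<in> Bs \<and> q = post_arr a g then 1 else 0)
        - (if tgt Q a = e \<and> pre_arr Q g a \<in> Bs \<and> q = pre_arr Q g a then 1 else 0)))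
      else 0)"

definition ker_delta0_ge1 :: "('v, 'a) quiver \<Rightarrow> ('v, 'a) path set
      \<Rightarrow> ('v \<times> ('v, 'a) path \<Rightarrow> 'k::field) set" where
  "ker_delta0_ge1 Q Bs = {f. (\<forall>x. x \<notin> VP_ge1 Q Bs \<longrightarrow> f x = 0) \<and> delta0 Q Bs f = (\<lambda>_. 0)}"

text \<open>The glued vertex f_1 is represented by e_1.\<close>
definition glue_v :: "'v \<Rightarrow> 'v \<Rightarrow> 'v \<Rightarrow> 'v" where
  "glue_v e1 en v = (if v = en then e1 else v)"

definition glue_quiver :: "('v, 'a) quiver \<Rightarrow> 'v \<Rightarrow> 'v \<Rightarrow> ('v, 'a) quiver" where
  "glue_quiver Q e1 en = \<lparr>verts = verts Q - {en}, arrs = arrs Q,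
      src = glue_v e1 en \<circ> src Q, tgt = glue_v e1 en \<circ> tgt Q\<rparr>"

definition star :: "'v \<Rightarrow> 'v \<Rightarrow> ('v, 'a) path \<Rightarrow> ('v, 'a) path" where
  "star e1 en p = (glue_v e1 en (fst p), snd p)"

text \<open>Generators of I_B: the r* for r in Z_A, and the b* c* (c first, then b) with
  t(c), s(b) in {e_1, e_n}, t(c) /= s(b).\<close>
definition glue_rels :: "('v, 'a) quiver \<Rightarrow> ('v, 'a) path set \<Rightarrow> 'v \<Rightarrow> 'v \<Rightarrow> ('v, 'a) path set" where
  "glue_rels Q Z e1 en = star e1 en ` Z \<union>
     {(glue_v e1 en (src Q c), [c, b]) | b c. b \<in> arrs Q \<and> c \<in> arrs Q \<and>
        tgt Q c \<in> {e1, en} \<and> src Q b \<in> {e1, en} \<and> tgt Q c \<noteq> src Q b}"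

text \<open>psi_0 : k((Q_A)_0 || B_A) -> k((Q_B)_0 || B_B), e||p |-> e*||p*, extended linearly.\<close>
definition psi0 :: "('v, 'a) quiver \<Rightarrow> ('v, 'a) path set \<Rightarrow> 'v \<Rightarrow> 'v
      \<Rightarrow> ('v \<times> ('v, 'a) path \<Rightarrow> 'k::field) \<Rightarrow> ('v \<times> ('v, 'a) path \<Rightarrow> 'k)" where
  "psi0 Q Bs e1 en f = (\<lambda>(v, q).
      \<Sum>(e, p)\<in>VP Q Bs. if (glue_v e1 en e, star e1 en p) = (v, q) then f (e, p) else 0)"

text \<open>A product of non-composable paths is 0, hence lies in I_A.\<close>
definition nonspecial :: "('v, 'a) quiver \<Rightarrow> ('v, 'a) path set \<Rightarrow> 'v \<Rightarrow> 'v \<Rightarrow> ('v, 'a) path \<Rightarrow> bool" where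
  "nonspecial Q Z e1 en p \<longleftrightarrow>
     p \<in> basis_paths Q Z \<and>
     ((fst p = e1 \<and> path_end Q p = en) \<or> (fst p = en \<and> path_end Q p = e1)) \<and>
     (\<forall>a\<in>arrs Q. src Q a = path_end Q p \<longrightarrow> contains_rel Z (post_arr a p)) \<and>
     (\<forall>b\<in>arrs Q. tgt Q b = fst p \<longrightarrow> contains_rel Z (pre_arr Q p b))"

definition nsp :: "('v, 'a) quiver \<Rightarrow> ('v, 'a) path set \<Rightarrow> 'v \<Rightarrow> 'v \<Rightarrow> nat" where
  "nsp Q Z e1 en = card {p. nonspecial Q Z e1 en p}"

definition fscale :: "'k::field \<Rightarrow> ('i \<Rightarrow> 'k) \<Rightarrow> ('i \<Rightarrow> 'k)" where
  "fscale c f = (\<lambda>x. c * f x)"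

abbreviation fspan :: "('i \<Rightarrow> 'k::field) set \<Rightarrow> ('i \<Rightarrow> 'k) set" where
  "fspan S \<equiv> module.span fscale S"

abbreviation fdim :: "('i \<Rightarrow> 'k::field) set \<Rightarrow> nat" where
  "fdim S \<equiv> vector_space.dim fscale S"

definition Z_nsp :: "('v, 'a) quiver \<Rightarrow> ('v, 'a) path set \<Rightarrow> 'v \<Rightarrow> 'v
      \<Rightarrow> ('v \<times> ('v, 'a) path \<Rightarrow> 'k::field) set" where
  "Z_nsp Q Z e1 en = fspan {(\<lambda>x. if x = (e1, star e1 en p) then 1 else 0) | p. nonspecial Q Z e1 en p}"

end

theory Submission
  imports Defs
begin


lemma fscale_vs: "vector_space (fscale :: 'k::field \<Rightarrow> ('i \<Rightarrow> 'k) \<Rightarrow> ('i \<Rightarrow> 'k))"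
  by unfold_locales (auto simp: fscale_def fun_eq_iff algebra_simps)

interpretation fs: vector_space "fscale :: 'k::field \<Rightarrow> ('i \<Rightarrow> 'k) \<Rightarrow> ('i \<Rightarrow> 'k)"
  by (rule fscale_vs)

lemma sum_fun_app: "(sum F A) y = sum (\<lambda>x. F x y) A"
  by (induction A rule: infinite_finite_induct) auto

definition supp_on :: "'i set \<Rightarrow> ('i \<Rightarrow> 'k::field) set" where
  "supp_on X = {f. \<forall>x. x \<notin> X \<longrightarrow> f x = 0}"

definition ind :: "'i \<Rightarrow> ('i \<Rightarrow> 'k::field)" where
  "ind x = (\<lambda>y. if y = x then 1 else 0)"

lemma subspace_supp_on: "fs.subspace (supp_on X)"
  by (rule fs.subspaceI) (auto simp: supp_on_def fscale_def)

lemma span_ind: assumes "finite X" shows "fs.span (ind ` X) = (supp_on X :: ('i \<Rightarrow> 'k::field) set)"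
proof
  show "fs.span (ind ` X) \<subseteq> (supp_on X :: ('i \<Rightarrow> 'k::field) set)"
    by (intro fs.span_minimal subspace_supp_on) (auto simp: supp_on_def ind_def)
  show "(supp_on X :: ('i \<Rightarrow> 'k::field) set) \<subseteq> fs.span (ind ` X)"
  proof
    fix f :: "'i \<Rightarrow> 'k" assume f: "f \<in> supp_on X"
    have "f = (\<Sum>x\<in>X. fscale (f x) (ind x))"
    proof
      fix y
      show "f y = (\<Sum>x\<in>X. fscale (f x) (ind x)) y"
        using f assms by (auto simp: sum_fun_app fscale_def ind_def supp_on_def if_distrib cong: if_cong)
    qed
    also have "\<dots> \<in> fs.span (ind ` X)"
      by (intro fs.span_sum fs.span_scale fs.span_base) auto
    finally show "f \<in> fs.span (ind ` X)" .
  qed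
qed

lemma indep_ind: "fs.independent (ind ` X :: ('i \<Rightarrow> 'k::field) set)"
proof
  assume "fs.dependent (ind ` X :: ('i \<Rightarrow> 'k::field) set)"
  then obtain x where x: "x \<in> X" and sp: "ind x \<in> fs.span (ind ` X - {ind x :: 'i \<Rightarrow> 'k})"
    unfolding fs.dependent_def by auto
  have "ind ` X - {ind x :: 'i \<Rightarrow> 'k} \<subseteq> supp_on (X - {x})"
    by (auto simp: supp_on_def ind_def)
  then have "fs.span (ind ` X - {ind x :: 'i \<Rightarrow> 'k}) \<subseteq> supp_on (X - {x})"
    by (intro fs.span_minimal subspace_supp_on)
  with sp have "(ind x :: 'i \<Rightarrow> 'k) x = 0" by (auto simp: supp_on_def)
  then show False by (simp add: ind_def)
qed

lemma inj_ind: "inj (ind :: 'i \<Rightarrow> ('i \<Rightarrow> 'k::field))"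
  by (rule injI) (metis ind_def zero_neq_one)

lemma indep_union_aux:
  assumes "fs.independent (P :: ('i \<Rightarrow> 'k::field) set)" "fs.independent Q"
    and "fs.span P \<inter> fs.span Q \<subseteq> {0}" and a: "a \<in> P" 
    and sp: "a \<in> fs.span ((P \<union> Q) - {a})"
  shows False
proof -
  have "(P \<union> Q) - {a} \<subseteq> (P - {a}) \<union> Q" by auto
  then have "a \<in> fs.span ((P - {a}) \<union> Q)" using sp fs.span_mono by blast
  then obtain x y where xy: "a = x + y" "x \<in> fs.span (P - {a})" "y \<in> fs.span Q"
    unfolding fs.span_Un by auto
  have "x \<in> fs.span P" using xy(2) fs.span_mono[of "P - {a}" P] by auto
  moreover have "a \<in> fs.span P" using a fs.span_base by auto
  ultimately have "y \<in> fs.span P" using xy(1) fs.span_diff[of a P x] by (simp add: algebra_simps)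
  with xy(3) assms(3) have "y = 0" by auto
  with xy have "a \<in> fs.span (P - {a})" by simp
  with a assms(1) show False unfolding fs.dependent_def by auto
qed

lemma indep_union:
  assumes "fs.independent (P :: ('i \<Rightarrow> 'k::field) set)" "fs.independent Q"
    and "fs.span P \<inter> fs.span Q \<subseteq> {0}"
  shows "fs.independent (P \<union> Q)"
proof
  assume "fs.dependent (P \<union> Q)"
  then obtain a where a: "a \<in> P \<union> Q" "a \<in> fs.span ((P \<union> Q) - {a})"
    unfolding fs.dependent_def by auto
  show False
  proof (cases "a \<in> P")
    case True then show False using indep_union_aux[OF assms _ a(2)] by blast
  next
    case False
    then have "a \<in> Q" using a by auto
    moreover have "fs.span Q \<inter> fs.span P \<subseteq> {0}" using assms(3) by auto
    ultimately show False using indep_union_aux[OF assms(2) assms(1), of a] a(2) by (simp add: Un_commute)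
  qed
qed




lemma path_end_Nil[simp]: "path_end Q (v, []) = v"
  by (simp add: path_end_def)
lemma path_end_Cons: "path_end Q (v, a # l) = path_end Q (tgt Q a, l)"
  by (cases l) (auto simp: path_end_def)
lemma path_end_snoc[simp]: "path_end Q (v, l @ [a]) = tgt Q a"
  by (simp add: path_end_def)
lemma chain_append: "arrow_chain Q v (l1 @ l2) \<longleftrightarrow> arrow_chain Q v l1 \<and> arrow_chain Q (path_end Q (v, l1)) l2"
  by (induction l1 arbitrary: v) (auto simp: path_end_Cons)
lemma chain_set: "arrow_chain Q v l \<Longrightarrow> set l \<subseteq> arrs Q"
  by (induction l arbitrary: v) auto
lemma chain_hd: "arrow_chain Q v l \<Longrightarrow> l \<noteq> [] \<Longrightarrow> src Q (hd l) = v"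
  by (cases l) auto
lemma chain_pair: "arrow_chain Q v l \<Longrightarrow> sublist [c,b] l \<Longrightarrow> tgt Q c = src Q b"
  unfolding sublist_def by (auto simp: chain_append)

lemma sum_pick: "finite S \<Longrightarrow> (\<forall>x. x \<notin> S \<longrightarrow> f x = 0) \<Longrightarrow>
   (\<Sum>x\<in>S. if x = c \<and> P then f x else (0::'k::field)) = (if P then f c else 0)"
  by (cases P) (auto simp: sum.delta)

lemma delta0_eval:
  assumes fin: "finite (VP Q Bs)" and supp: "\<forall>x. x \<notin> VP Q Bs \<longrightarrow> f x = 0"
  shows "delta0 Q Bs f (a, q) = (if (a,q) \<in> AP Q Bs then
     (if snd q \<noteq> [] \<and> last (snd q) = a then f (fst q, (fst q, butlast (snd q))) else 0)
   - (if snd q \<noteq> [] \<and> hd (snd q) = a then f (tgt Q a, (tgt Q a, tl (snd q))) else 0) else (0::'k::field))"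
proof (cases "(a,q) \<in> AP Q Bs")
  case False then show ?thesis by (simp add: delta0_def)
next
  case True
  then have q: "q \<in> Bs" "fst q = src Q a" by (auto simp: AP_def)
  define c1 where "c1 = (snd q \<noteq> [] \<and> last (snd q) = a)"
  define c2 where "c2 = (snd q \<noteq> [] \<and> hd (snd q) = a)"
  have "delta0 Q Bs f (a, q) = (\<Sum>x\<in>VP Q Bs. (if x = (fst q, (fst q, butlast (snd q))) \<and> c1 then f x else 0)
        - (if x = (tgt Q a, (tgt Q a, tl (snd q))) \<and> c2 then f x else 0))"
    unfolding delta0_def using True
  proof (simp, intro sum.cong refl)
    fix x assume x: "x \<in> VP Q Bs"
    obtain e g where xe: "x = (e, g)" by (cases x) blast
    have fg: "fst g = e" using x xe by (auto simp: VP_def)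
    have ind: "\<And>c A B. c * ((if A then 1 else 0) - (if B then 1 else 0)) = (if A then c else 0) - (if B then (c::'k) else 0)"
      by auto
    have i1: "(src Q a = e \<and> post_arr a g \<in> Bs \<and> q = post_arr a g) \<longleftrightarrow> (x = (fst q, (fst q, butlast (snd q))) \<and> c1)"
    proof
      assume h: "src Q a = e \<and> post_arr a g \<in> Bs \<and> q = post_arr a g"
      then show "x = (fst q, (fst q, butlast (snd q))) \<and> c1" using fg xe
        by (auto simp: post_arr_def c1_def prod_eq_iff)
    next
      assume h: "x = (fst q, (fst q, butlast (snd q))) \<and> c1"
      then have "q = post_arr a g" using xe unfolding c1_def post_arr_def
        by (auto simp: prod_eq_iff append_butlast_last_id)
      then show "src Q a = e \<and> post_arr a g \<in> Bs \<and> q = post_arr a g"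
        using h q xe by auto
    qed
    have i2: "(tgt Q a = e \<and> pre_arr Q g a \<in> Bs \<and> q = pre_arr Q g a) \<longleftrightarrow> (x = (tgt Q a, (tgt Q a, tl (snd q))) \<and> c2)"
    proof
      assume h: "tgt Q a = e \<and> pre_arr Q g a \<in> Bs \<and> q = pre_arr Q g a"
      then show "x = (tgt Q a, (tgt Q a, tl (snd q))) \<and> c2" using fg xe
        by (auto simp: pre_arr_def c2_def prod_eq_iff)
    next
      assume h: "x = (tgt Q a, (tgt Q a, tl (snd q))) \<and> c2"
      then have "q = pre_arr Q g a" using xe q unfolding c2_def pre_arr_def
        by (auto simp: prod_eq_iff)
      then show "tgt Q a = e \<and> pre_arr Q g a \<in> Bs \<and> q = pre_arr Q g a"
        using h q xe by auto
    qed
    have ind: "\<And>c A B. c * ((if A then 1 else 0) - (if B then 1 else 0)) = (if A then c else 0) - (if B then (c::'k) else 0)"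
      by auto
    show "(case x of (e, g) \<Rightarrow> f (e, g) * ((if src Q a = e \<and> post_arr a g \<in> Bs \<and> q = post_arr a g then 1 else 0) -
            (if tgt Q a = e \<and> pre_arr Q g a \<in> Bs \<and> q = pre_arr Q g a then 1 else 0))) =
         (if x = (fst q, fst q, butlast (snd q)) \<and> c1 then f x else 0) -
         (if x = (tgt Q a, tgt Q a, tl (snd q)) \<and> c2 then f x else 0)"
      unfolding xe prod.case using i1 i2 xe by (simp only: ind)
  qed
  also have "\<dots> = (if c1 then f (fst q, (fst q, butlast (snd q))) else 0) - (if c2 then f (tgt Q a, (tgt Q a, tl (snd q))) else 0)"
    by (simp add: sum_subtractf sum_pick[OF fin supp])
  finally show ?thesis using True by (simp add: c1_def c2_def)
qed




locale GL =
  fixes Q :: "('v, 'a) quiver" and Z :: "('v, 'a) path set" and e1 en :: 'v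
  assumes md: "monomial_data Q Z" and e1: "e1 \<in> verts Q" and en: "en \<in> verts Q" and ne: "e1 \<noteq> en"
begin

abbreviation "g \<equiv> glue_v e1 en"
abbreviation "st \<equiv> star e1 en"
abbreviation "QB \<equiv> glue_quiver Q e1 en"
abbreviation "BA \<equiv> basis_paths Q Z"
abbreviation "BB \<equiv> basis_paths QB (glue_rels Q Z e1 en)"
abbreviation "VA \<equiv> VP_ge1 Q BA"
abbreviation "VB \<equiv> VP_ge1 QB BB"

definition hdok :: "('v, 'a) path \<Rightarrow> bool" where
  "hdok p \<longleftrightarrow> (snd p \<noteq> [] \<longrightarrow> fst p = src Q (hd (snd p)))"

lemma arr_verts: "a \<in> arrs Q \<Longrightarrow> src Q a \<in> verts Q \<and> tgt Q a \<in> verts Q"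
  using md by (auto simp: monomial_data_def)

lemma QB_simps[simp]: "verts QB = verts Q - {en}" "arrs QB = arrs Q"
  "src QB a = g (src Q a)" "tgt QB a = g (tgt Q a)"
  by (auto simp: glue_quiver_def)

lemma st_simps[simp]: "fst (st p) = g (fst p)" "snd (st p) = snd p"
  by (auto simp: star_def)

lemma g_in: "v \<in> verts Q \<Longrightarrow> g v \<in> verts Q \<and> g v \<noteq> en"
  using e1 ne by (auto simp: glue_v_def)

lemma g_eqD: "g x = g y \<Longrightarrow> x \<noteq> y \<Longrightarrow> x \<in> {e1, en} \<and> y \<in> {e1, en}"
  by (auto simp: glue_v_def split: if_splits)

lemma g_e1: "x \<in> {e1, en} \<Longrightarrow> g x = e1"
  by (auto simp: glue_v_def)

lemma chain_QB: "arrow_chain Q v l \<Longrightarrow> arrow_chain QB (g v) l"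
  by (induction l arbitrary: v) auto

lemma path_end_st: "path_end QB (st p) = g (path_end Q p)"
  by (simp add: path_end_def star_def)

lemma is_path_hdok: "is_path Q p \<Longrightarrow> hdok p"
  by (auto simp: is_path_def hdok_def chain_hd)

lemma st_inj: "snd p \<noteq> [] \<Longrightarrow> hdok p \<Longrightarrow> hdok p' \<Longrightarrow> st p = st p' \<Longrightarrow> p = p'"
  unfolding hdok_def by (metis prod_eqI st_simps(2))

lemma BA_BB: assumes "p \<in> BA" shows "st p \<in> BB"
proof -
  from assms have p: "fst p \<in> verts Q" "arrow_chain Q (fst p) (snd p)" "\<not> contains_rel Z p"
    by (auto simp: basis_paths_def is_path_def)
  have "is_path QB (st p)"
    using p g_in chain_QB by (auto simp: is_path_def)
  moreover have "\<not> contains_rel (glue_rels Q Z e1 en) (st p)"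
  proof
    assume "contains_rel (glue_rels Q Z e1 en) (st p)"
    then obtain r where r: "r \<in> glue_rels Q Z e1 en" "sublist (snd r) (snd p)"
      by (auto simp: contains_rel_def)
    show False
    proof (cases "r \<in> st ` Z")
      case True
      then obtain r' where "r' \<in> Z" "r = st r'" by auto
      with r p show False by (auto simp: contains_rel_def)
    next
      case False
      with r obtain b c where "snd r = [c, b]" "tgt Q c \<noteq> src Q b"
        by (auto simp: glue_rels_def)
      with r p chain_pair show False by metis
    qed
  qed
  ultimately show ?thesis by (simp add: basis_paths_def)
qed

lemma chain_back:
  "arrow_chain QB w l \<Longrightarrow>
   (\<forall>c b. sublist [c,b] l \<longrightarrow> \<not> (tgt Q c \<in> {e1,en} \<and> src Q b \<in> {e1,en} \<and> tgt Q c \<noteq> src Q b)) \<Longrightarrow>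
   l \<noteq> [] \<Longrightarrow> arrow_chain Q (src Q (hd l)) l \<and> w = g (src Q (hd l))"
proof (induction l arbitrary: w)
  case Nil then show ?case by simp
next
  case (Cons a l)
  show ?case
  proof (cases l)
    case Nil with Cons.prems show ?thesis by auto
  next
    case (Cons b l')
    have "\<forall>c b. sublist [c,b] l \<longrightarrow> \<not> (tgt Q c \<in> {e1,en} \<and> src Q b \<in> {e1,en} \<and> tgt Q c \<noteq> src Q b)"
      using Cons.prems(2) by (meson sublist_Cons_right)
    with Cons.IH[of "g (tgt Q a)"] Cons.prems(1) Cons
    have ih: "arrow_chain Q (src Q b) l" "g (tgt Q a) = g (src Q b)" by auto
    have "tgt Q a = src Q b"
    proof (rule ccontr)
      assume "tgt Q a \<noteq> src Q b"
      with ih(2) g_eqD have "tgt Q a \<in> {e1,en}" "src Q b \<in> {e1,en}" by blast+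
      moreover have "sublist [a,b] (a # l)" using Cons by simp
      ultimately show False using Cons.prems(2) \<open>tgt Q a \<noteq> src Q b\<close> by blast
    qed
    then show ?thesis using ih Cons.prems(1) Cons by auto
  qed
qed

lemma BB_back:
  assumes "q \<in> BB" "snd q \<noteq> []"
  shows "(src Q (hd (snd q)), snd q) \<in> BA \<and> st (src Q (hd (snd q)), snd q) = q"
proof -
  from assms have q: "fst q \<in> verts Q" "arrow_chain QB (fst q) (snd q)"
     "\<not> contains_rel (glue_rels Q Z e1 en) q"
    by (auto simp: basis_paths_def is_path_def)
  have sa: "set (snd q) \<subseteq> arrs Q" using chain_set[OF q(2)] by simp
  have "\<forall>c b. sublist [c,b] (snd q) \<longrightarrow> \<not> (tgt Q c \<in> {e1,en} \<and> src Q b \<in> {e1,en} \<and> tgt Q c \<noteq> src Q b)"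
  proof (intro allI impI notI)
    fix c b assume sl: "sublist [c,b] (snd q)" and bad: "tgt Q c \<in> {e1,en} \<and> src Q b \<in> {e1,en} \<and> tgt Q c \<noteq> src Q b"
    have "set [c,b] \<subseteq> arrs Q" using sl sa by (meson set_mono_sublist subset_trans)
    then have "(g (src Q c), [c, b]) \<in> glue_rels Q Z e1 en"
      using bad unfolding glue_rels_def by auto
    with sl q(3) show False by (force simp: contains_rel_def)
  qed
  from chain_back[OF q(2) this assms(2)]
  have ch: "arrow_chain Q (src Q (hd (snd q))) (snd q)" "fst q = g (src Q (hd (snd q)))" by auto
  have hv: "src Q (hd (snd q)) \<in> verts Q" using sa assms(2) arr_verts by (meson hd_in_set subsetD)
  have "\<not> contains_rel Z (src Q (hd (snd q)), snd q)"
  proof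
    assume "contains_rel Z (src Q (hd (snd q)), snd q)"
    then obtain r where "r \<in> Z" "sublist (snd r) (snd q)" by (auto simp: contains_rel_def)
    then have "st r \<in> glue_rels Q Z e1 en" "sublist (snd (st r)) (snd q)" by (auto simp: glue_rels_def)
    with q(3) show False by (auto simp: contains_rel_def)
  qed
  then show ?thesis using ch hv by (auto simp: basis_paths_def is_path_def star_def prod_eq_iff)
qed

lemma BA_len: obtains N where "\<And>p. p \<in> BA \<Longrightarrow> length (snd p) < N"
proof -
  from md obtain N where N: "\<forall>p. is_path Q p \<and> path_len p \<ge> N \<longrightarrow> contains_rel Z p"
    by (auto simp: monomial_data_def)
  show ?thesis by (rule that[of N]) (use N in \<open>force simp: basis_paths_def path_len_def\<close>)
qed

lemma fin_BA: "finite BA"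
proof -
  obtain N where N: "\<And>p. p \<in> BA \<Longrightarrow> length (snd p) < N" using BA_len by blast
  have "BA \<subseteq> verts Q \<times> {l. set l \<subseteq> arrs Q \<and> length l \<le> N}"
    using N by (force simp: basis_paths_def is_path_def dest: chain_set)
  moreover have "finite (verts Q)" "finite (arrs Q)" using md by (auto simp: monomial_data_def)
  ultimately show ?thesis using finite_lists_length_le[of "arrs Q" N] finite_subset by blast
qed

lemma fin_BB: "finite BB"
proof -
  have "BB \<subseteq> st ` BA \<union> (\<lambda>v. (v, [])) ` verts Q"
  proof
    fix q assume q: "q \<in> BB"
    show "q \<in> st ` BA \<union> (\<lambda>v. (v, [])) ` verts Q"
    proof (cases "snd q = []")
      case True
      then have "q = (fst q, [])" by (simp add: prod_eq_iff)
      moreover have "fst q \<in> verts Q" using q by (auto simp: basis_paths_def is_path_def)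
      ultimately show ?thesis by blast
    next
      case False
      from BB_back[OF q False] show ?thesis by (metis UnI1 image_eqI)
    qed
  qed
  moreover have "finite (verts Q)" using md by (auto simp: monomial_data_def)
  ultimately show ?thesis using fin_BA by (meson finite_Un finite_imageI finite_subset)
qed

lemma fin_VP: "finite (verts Q') \<Longrightarrow> finite Bs \<Longrightarrow> finite (VP Q' Bs)"
  by (rule finite_subset[of _ "verts Q' \<times> Bs"]) (auto simp: VP_def)

lemma fin_VPA: "finite (VP Q BA)" and fin_VPB: "finite (VP QB BB)"
  using md fin_BA fin_BB by (auto intro!: fin_VP simp: monomial_data_def)

end



lemma VP_ge1_mem: "(e, p) \<in> VP_ge1 Q' Bs \<longleftrightarrow> e \<in> verts Q' \<and> p \<in> Bs \<and> fst p = e \<and> path_end Q' p = e \<and> snd p \<noteq> []"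
  by (auto simp: VP_ge1_def VP_def path_len_def Suc_le_eq)

lemma VP_ge1_sub: "VP_ge1 Q' Bs \<subseteq> VP Q' Bs"
  by (auto simp: VP_ge1_def)

lemma AP_mem: "(a, q) \<in> AP Q' Bs \<longleftrightarrow> a \<in> arrs Q' \<and> q \<in> Bs \<and> fst q = src Q' a \<and> path_end Q' q = tgt Q' a"
  by (auto simp: AP_def)

lemma supp_onD: "f \<in> supp_on X \<Longrightarrow> x \<notin> X \<Longrightarrow> f x = 0"
  by (simp add: supp_on_def)

context GL begin

definition Snsp :: "('v \<times> ('v, 'a) path) set" where
  "Snsp = {(e1, st p) | p. nonspecial Q Z e1 en p}"

lemma BA_path: "p \<in> BA \<Longrightarrow> is_path Q p"
  by (simp add: basis_paths_def)

lemma VA_hdok: "(e, p) \<in> VA \<Longrightarrow> hdok p \<and> snd p \<noteq> [] \<and> e = fst p"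
  by (auto simp: VP_ge1_mem intro: is_path_hdok BA_path)

lemma psi0_at:
  assumes f: "f \<in> supp_on VA" and h: "hdok p"
  shows "psi0 Q BA e1 en f (g (fst p), st p) = (if (fst p, p) \<in> VA then f (fst p, p) else 0)"
proof -
  have "psi0 Q BA e1 en f (g (fst p), st p) = (\<Sum>x\<in>VP Q BA. if x = (fst p, p) \<and> True then f x else 0)"
    unfolding psi0_def
  proof (simp only: prod.case, intro sum.cong refl)
    fix x assume "x \<in> VP Q BA"
    obtain e p' where x: "x = (e, p')" by (cases x) blast
    show "(case x of (e, pa) \<Rightarrow> if (g e, st pa) = (g (fst p), st p) then f (e, pa) else 0) =
          (if x = (fst p, p) \<and> True then f x else 0)"
    proof (cases "f x = 0")
      case True then show ?thesis using x by auto
    next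
      case False
      then have "x \<in> VA" using f unfolding supp_on_def by blast
      then have hh: "hdok p' \<and> snd p' \<noteq> [] \<and> e = fst p'" using VA_hdok x by auto
      have "(g e, st p') = (g (fst p), st p) \<Longrightarrow> x = (fst p, p)"
        using st_inj[of p' p] hh h x by auto
      then show ?thesis using x by auto
    qed
  qed
  also have "\<dots> = f (fst p, p)"
  proof -
    have supA: "\<forall>x. x \<notin> VP Q BA \<longrightarrow> f x = 0" using f VP_ge1_sub unfolding supp_on_def by blast
    show ?thesis using sum_pick[OF fin_VPA supA, of "(fst p, p)" True] by simp
  qed
  finally show ?thesis using supp_onD[OF f] by auto
qed

lemma psi0_out:
  assumes f: "f \<in> supp_on VA" and x: "x \<notin> (\<lambda>(e, p). (g e, st p)) ` VA"
  shows "psi0 Q BA e1 en f x = 0"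
  unfolding psi0_def
proof (cases x, simp only: prod.case, intro sum.neutral ballI)
  fix v q y assume xv: "x = (v, q)" and "y \<in> VP Q BA"
  show "(case y of (e, p) \<Rightarrow> if (g e, st p) = (v, q) then f (e, p) else 0) = 0"
  proof -
    obtain e p where Pair: "y = (e, p)" by (cases y) blast
    show ?thesis
    proof (cases "(e, p) \<in> VA")
      case True then have "(g e, st p) \<noteq> (v, q)" using x xv by force
      then show ?thesis using Pair by auto
    next
      case False then show ?thesis using Pair supp_onD[OF f False] by auto
    qed
  qed
qed

lemma psi_VA_VB: "(e, p) \<in> VA \<Longrightarrow> (g e, st p) \<in> VB"
  by (auto simp: VP_ge1_mem path_end_st BA_BB g_in)

lemma nsp_props: "nonspecial Q Z e1 en p \<Longrightarrow>
   p \<in> BA \<and> snd p \<noteq> [] \<and> fst p \<in> {e1,en} \<and> path_end Q p \<in> {e1,en} \<and> fst p \<noteq> path_end Q p"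
  using ne by (auto simp: nonspecial_def path_end_def)

lemma Snsp_VB: "Snsp \<subseteq> VB"
proof
  fix x assume "x \<in> Snsp"
  then obtain p where p: "nonspecial Q Z e1 en p" "x = (e1, st p)" by (auto simp: Snsp_def)
  from nsp_props[OF p(1)] have "p \<in> BA" "snd p \<noteq> []" "fst p \<in> {e1,en}" "path_end Q p \<in> {e1,en}" by auto
  then have "g (fst p) = e1" "g (path_end Q p) = e1" "st p \<in> BB" using g_e1 BA_BB by auto
  moreover have "e1 \<in> verts QB" using e1 ne by simp
  moreover have "path_end QB (st p) = g (path_end Q p)" by (rule path_end_st)
  moreover have "snd (st p) \<noteq> []" using \<open>snd p \<noteq> []\<close> by simp
  moreover have "fst (st p) = g (fst p)" by simp
  ultimately show "x \<in> VB" unfolding p(2) VP_ge1_mem by metis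
qed

lemma fin_Snsp: "finite Snsp"
proof -
  have "Snsp \<subseteq> VP QB BB" using Snsp_VB VP_ge1_sub[of QB BB] by (rule subset_trans)
  then show ?thesis using fin_VPB by (rule finite_subset)
qed

lemma disj_Snsp: "(e, p) \<in> VA \<Longrightarrow> (g e, st p) \<notin> Snsp"
proof
  assume a: "(e, p) \<in> VA" "(g e, st p) \<in> Snsp"
  then obtain p' where p': "nonspecial Q Z e1 en p'" "(g e, st p) = (e1, st p')" by (auto simp: Snsp_def)
  have "p = p'" using st_inj[of p p'] VA_hdok[OF a(1)] nsp_props[OF p'(1)] p'(2) is_path_hdok BA_path by auto
  then show False using a(1) nsp_props[OF p'(1)] by (auto simp: VP_ge1_mem)
qed

lemma Snsp_inj: "nonspecial Q Z e1 en p \<Longrightarrow> nonspecial Q Z e1 en p' \<Longrightarrow> st p = st p' \<Longrightarrow> p = p'"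
  using st_inj nsp_props is_path_hdok BA_path by metis

lemma last_facts:
  assumes "q \<in> BA" "snd q \<noteq> []" "last (snd q) = a"
  shows "is_path Q (fst q, butlast (snd q)) \<and> path_end Q (fst q, butlast (snd q)) = src Q a
     \<and> q = post_arr a (fst q, butlast (snd q)) \<and> path_end Q q = tgt Q a"
proof -
  obtain l0 where l: "snd q = l0 @ [a]" using assms by (metis append_butlast_last_id)
  have bl: "butlast (snd q) = l0" using l by simp
  have ch: "arrow_chain Q (fst q) (snd q)" "fst q \<in> verts Q" using assms(1) by (auto simp: basis_paths_def is_path_def)
  then have c2: "arrow_chain Q (fst q) l0" "arrow_chain Q (path_end Q (fst q, l0)) [a]"
    using l chain_append by metis+
  have "q = (fst q, l0 @ [a])" using l by (metis prod.collapse)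
  then have "path_end Q q = tgt Q a" by (metis path_end_snoc)
  moreover have "q = post_arr a (fst q, l0)" using l by (simp add: post_arr_def prod_eq_iff)
  ultimately show ?thesis unfolding bl using c2 ch by (auto simp: is_path_def)
qed

lemma hd_facts:
  assumes "q \<in> BA" "snd q \<noteq> []" "hd (snd q) = a"
  shows "is_path Q (tgt Q a, tl (snd q)) \<and> fst q = src Q a
     \<and> path_end Q (tgt Q a, tl (snd q)) = path_end Q q \<and> q = pre_arr Q (tgt Q a, tl (snd q)) a"
proof -
  obtain l0 where l: "snd q = a # l0" using assms by (metis list.collapse)
  have bl: "tl (snd q) = l0" using l by simp
  have ch: "arrow_chain Q (fst q) (snd q)" using assms(1) by (auto simp: basis_paths_def is_path_def)
  then have c2: "a \<in> arrs Q" "src Q a = fst q" "arrow_chain Q (tgt Q a) l0" using l by auto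
  have "q = (fst q, a # l0)" using l by (metis prod.collapse)
  then have "path_end Q q = path_end Q (tgt Q a, l0)" by (metis path_end_Cons)
  moreover have "q = pre_arr Q (tgt Q a, l0) a" using l c2 by (simp add: pre_arr_def prod_eq_iff)
  ultimately show ?thesis unfolding bl using c2 arr_verts by (auto simp: is_path_def)
qed

lemma AP_B_decomp:
  assumes "(a, q') \<in> AP QB BB" "snd q' \<noteq> []"
  obtains q where "q \<in> BA" "q' = st q" "a \<in> arrs Q" "g (fst q) = g (src Q a)" "g (path_end Q q) = g (tgt Q a)"
proof -
  from assms have q': "q' \<in> BB" "a \<in> arrs Q" "fst q' = g (src Q a)" "path_end QB q' = g (tgt Q a)"
    by (auto simp: AP_mem)
  from BB_back[OF q'(1) assms(2)] obtain q where "q \<in> BA" "q' = st q" by metis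
  moreover from this have "g (fst q) = g (src Q a)" "g (path_end Q q) = g (tgt Q a)"
    using q' path_end_st[of q] by auto
  ultimately show ?thesis using that q'(2) by blast
qed

lemma AP_B_of: "q \<in> BA \<Longrightarrow> a \<in> arrs Q \<Longrightarrow> g (fst q) = g (src Q a) \<Longrightarrow> g (path_end Q q) = g (tgt Q a)
   \<Longrightarrow> (a, st q) \<in> AP QB BB"
  by (auto simp: AP_mem BA_BB path_end_st)

lemma AP_A_B: "(a, q) \<in> AP Q BA \<Longrightarrow> (a, st q) \<in> AP QB BB"
  by (auto simp: AP_mem BA_BB path_end_st)

lemma st_pair[simp]: "st (v, l) = (g v, l)"
  by (simp add: star_def)

end


context GL begin

lemma delta_B_at:
  assumes h: "\<forall>x. x \<notin> VP QB BB \<longrightarrow> h x = 0" and q: "snd q \<noteq> []" and ap: "(a, st q) \<in> AP QB BB"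
  shows "delta0 QB BB h (a, st q) =
    (if last (snd q) = a then h (g (fst q), (g (fst q), butlast (snd q))) else 0)
  - (if hd (snd q) = a then h (g (tgt Q a), (g (tgt Q a), tl (snd q))) else (0::'k::field))"
proof -
  have "delta0 QB BB h (a, st q) = (if (a, st q) \<in> AP QB BB then
     (if snd (st q) \<noteq> [] \<and> last (snd (st q)) = a then h (fst (st q), (fst (st q), butlast (snd (st q)))) else 0)
   - (if snd (st q) \<noteq> [] \<and> hd (snd (st q)) = a then h (tgt QB a, (tgt QB a, tl (snd (st q)))) else 0) else 0)"
    by (rule delta0_eval[OF fin_VPB h])
  then show ?thesis using ap q by (simp only: st_simps QB_simps if_True simp_thms)
qed

lemma ker_supp: "f \<in> ker_delta0_ge1 Q' Bs \<longleftrightarrow> f \<in> supp_on (VP_ge1 Q' Bs) \<and> (\<forall>a q. delta0 Q' Bs f (a, q) = 0)"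
  by (auto simp: ker_delta0_ge1_def supp_on_def fun_eq_iff)

lemma psi_KB:
  assumes f: "f \<in> ker_delta0_ge1 Q BA"
  shows "psi0 Q BA e1 en f \<in> ker_delta0_ge1 QB BB"
proof -
  have fs: "f \<in> supp_on VA" and dA: "\<And>a q. delta0 Q BA f (a, q) = 0" using f by (auto simp: ker_supp)
  have supA: "\<forall>x. x \<notin> VP Q BA \<longrightarrow> f x = 0" using supp_onD[OF fs] VP_ge1_sub by blast
  define F where "F = psi0 Q BA e1 en f"
  have FB: "F \<in> supp_on VB"
    unfolding supp_on_def
  proof (intro CollectI allI impI)
    fix x assume "x \<notin> VB"
    then have "x \<notin> (\<lambda>(e,p). (g e, st p)) ` VA" using psi_VA_VB by auto
    then show "F x = 0" unfolding F_def by (rule psi0_out[OF fs])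
  qed
  have FP: "\<forall>x. x \<notin> VP QB BB \<longrightarrow> F x = 0" using supp_onD[OF FB] VP_ge1_sub by blast
  have "delta0 QB BB F (a, q') = 0" for a q'
  proof (cases "(a, q') \<in> AP QB BB \<and> snd q' \<noteq> []")
    case False
    then show ?thesis using delta0_eval[OF fin_VPB FP, of a q'] by auto
  next
    case True
    then obtain q where q: "q \<in> BA" "q' = st q" "a \<in> arrs Q" "g (fst q) = g (src Q a)"
        "g (path_end Q q) = g (tgt Q a)"
      using AP_B_decomp by blast
    have sq: "snd q \<noteq> []" using True q(2) by simp
    have ap: "(a, st q) \<in> AP QB BB" using True q(2) by simp
    have T1: "(if last (snd q) = a then F (g (fst q), (g (fst q), butlast (snd q))) else 0)
        = (if last (snd q) = a then f (fst q, (fst q, butlast (snd q))) else 0)"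
    proof (cases "last (snd q) = a")
      case True
      from last_facts[OF q(1) sq True] have "is_path Q (fst q, butlast (snd q))" by blast
      then have "hdok (fst q, butlast (snd q))" by (rule is_path_hdok)
      from psi0_at[OF fs this] have "F (g (fst q), (g (fst q), butlast (snd q)))
          = (if (fst q, (fst q, butlast (snd q))) \<in> VA then f (fst q, (fst q, butlast (snd q))) else 0)"
        unfolding F_def by simp
      also have "\<dots> = f (fst q, (fst q, butlast (snd q)))" using supp_onD[OF fs] by auto
      finally show ?thesis by simp
    qed simp
    have T2: "(if hd (snd q) = a then F (g (tgt Q a), (g (tgt Q a), tl (snd q))) else 0)
        = (if hd (snd q) = a then f (tgt Q a, (tgt Q a, tl (snd q))) else 0)"
    proof (cases "hd (snd q) = a")
      case True
      from hd_facts[OF q(1) sq True] have "is_path Q (tgt Q a, tl (snd q))" by blast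
      then have "hdok (tgt Q a, tl (snd q))" by (rule is_path_hdok)
      from psi0_at[OF fs this] have "F (g (tgt Q a), (g (tgt Q a), tl (snd q)))
          = (if (tgt Q a, (tgt Q a, tl (snd q))) \<in> VA then f (tgt Q a, (tgt Q a, tl (snd q))) else 0)"
        unfolding F_def by simp
      also have "\<dots> = f (tgt Q a, (tgt Q a, tl (snd q)))" using supp_onD[OF fs] by auto
      finally show ?thesis by simp
    qed simp
    have D: "delta0 QB BB F (a, q') = (if last (snd q) = a then f (fst q, (fst q, butlast (snd q))) else 0)
        - (if hd (snd q) = a then f (tgt Q a, (tgt Q a, tl (snd q))) else 0)"
      using delta_B_at[OF FP sq ap] T1 T2 q(2) by simp
    show ?thesis
    proof (cases "(a, q) \<in> AP Q BA")
      case True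
      then show ?thesis using D delta0_eval[OF fin_VPA supA, of a q] dA[of a q] sq by simp
    next
      case False
      have z1: "(if last (snd q) = a then f (fst q, (fst q, butlast (snd q))) else 0) = 0"
      proof (rule ccontr)
        assume nz: "(if last (snd q) = a then f (fst q, (fst q, butlast (snd q))) else 0) \<noteq> 0"
        then have la: "last (snd q) = a" by (auto split: if_splits)
        with nz have "f (fst q, (fst q, butlast (snd q))) \<noteq> 0" by simp
        then have "(fst q, (fst q, butlast (snd q))) \<in> VA" using supp_onD[OF fs] by blast
        then have "path_end Q (fst q, butlast (snd q)) = fst q" by (simp add: VP_ge1_mem)
        with last_facts[OF q(1) sq la] have "fst q = src Q a" "path_end Q q = tgt Q a" by auto
        then have "(a, q) \<in> AP Q BA" using q by (simp add: AP_mem)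
        with False show False by simp
      qed
      have z2: "(if hd (snd q) = a then f (tgt Q a, (tgt Q a, tl (snd q))) else 0) = 0"
      proof (rule ccontr)
        assume nz: "(if hd (snd q) = a then f (tgt Q a, (tgt Q a, tl (snd q))) else 0) \<noteq> 0"
        then have la: "hd (snd q) = a" by (auto split: if_splits)
        with nz have "f (tgt Q a, (tgt Q a, tl (snd q))) \<noteq> 0" by simp
        then have "(tgt Q a, (tgt Q a, tl (snd q))) \<in> VA" using supp_onD[OF fs] by blast
        then have "path_end Q (tgt Q a, tl (snd q)) = tgt Q a" by (simp add: VP_ge1_mem)
        with hd_facts[OF q(1) sq la] have "fst q = src Q a" "path_end Q q = tgt Q a" by auto
        then have "(a, q) \<in> AP Q BA" using q by (simp add: AP_mem)
        with False show False by simp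
      qed
      show ?thesis using D z1 z2 by simp
    qed
  qed
  then show ?thesis using FB unfolding F_def ker_supp by blast
qed

lemma z_KB:
  assumes zs: "z \<in> supp_on Snsp"
  shows "z \<in> ker_delta0_ge1 QB BB"
proof -
  have zB: "z \<in> supp_on VB" using zs Snsp_VB by (auto simp: supp_on_def)
  have zP: "\<forall>x. x \<notin> VP QB BB \<longrightarrow> z x = 0" using supp_onD[OF zB] VP_ge1_sub by blast
  have "delta0 QB BB z (a, q') = 0" for a q'
  proof (cases "(a, q') \<in> AP QB BB \<and> snd q' \<noteq> []")
    case False
    then show ?thesis using delta0_eval[OF fin_VPB zP, of a q'] by auto
  next
    case True
    then obtain q where q: "q \<in> BA" "q' = st q" "a \<in> arrs Q"
      using AP_B_decomp by blast
    have sq: "snd q \<noteq> []" using True q(2) by simp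
    have ap: "(a, st q) \<in> AP QB BB" using True q(2) by simp
    have nq: "\<not> contains_rel Z q" using q(1) by (simp add: basis_paths_def)
    have z1: "(if last (snd q) = a then z (g (fst q), (g (fst q), butlast (snd q))) else 0) = 0"
    proof (rule ccontr)
      assume nz: "(if last (snd q) = a then z (g (fst q), (g (fst q), butlast (snd q))) else 0) \<noteq> 0"
      then have la: "last (snd q) = a" by (auto split: if_splits)
      with nz have "z (g (fst q), (g (fst q), butlast (snd q))) \<noteq> 0" by simp
      then have "(g (fst q), (g (fst q), butlast (snd q))) \<in> Snsp" using supp_onD[OF zs] by blast
      then obtain p where p: "nonspecial Q Z e1 en p" "(g (fst q), (g (fst q), butlast (snd q))) = (e1, st p)"
        unfolding Snsp_def by blast
      note lf = last_facts[OF q(1) sq la]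
      have "p = (fst q, butlast (snd q))"
        using st_inj[of p "(fst q, butlast (snd q))"] nsp_props[OF p(1)] p(2) is_path_hdok BA_path lf
        by auto
      then have "contains_rel Z (post_arr a (fst q, butlast (snd q)))"
        using p(1) q(3) lf unfolding nonspecial_def by auto
      then show False using lf nq by auto
    qed
    have z2: "(if hd (snd q) = a then z (g (tgt Q a), (g (tgt Q a), tl (snd q))) else 0) = 0"
    proof (rule ccontr)
      assume nz: "(if hd (snd q) = a then z (g (tgt Q a), (g (tgt Q a), tl (snd q))) else 0) \<noteq> 0"
      then have la: "hd (snd q) = a" by (auto split: if_splits)
      with nz have "z (g (tgt Q a), (g (tgt Q a), tl (snd q))) \<noteq> 0" by simp
      then have "(g (tgt Q a), (g (tgt Q a), tl (snd q))) \<in> Snsp" using supp_onD[OF zs] by blast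
      then obtain p where p: "nonspecial Q Z e1 en p" "(g (tgt Q a), (g (tgt Q a), tl (snd q))) = (e1, st p)"
        unfolding Snsp_def by blast
      note lf = hd_facts[OF q(1) sq la]
      have "p = (tgt Q a, tl (snd q))"
        using st_inj[of p "(tgt Q a, tl (snd q))"] nsp_props[OF p(1)] p(2) is_path_hdok BA_path lf
        by auto
      then have "contains_rel Z (pre_arr Q (tgt Q a, tl (snd q)) a)"
        using p(1) q(3) lf unfolding nonspecial_def by auto
      then show False using lf nq by auto
    qed
    show ?thesis using delta_B_at[OF zP sq ap] z1 z2 q(2) by simp
  qed
  then show ?thesis using zB unfolding ker_supp by blast
qed

lemma VB_VA:
  assumes p: "is_path Q p" "path_end Q p = fst p" and v: "(g (fst p), st p) \<in> VB"
  shows "(fst p, p) \<in> VA"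
proof -
  from v have sB: "st p \<in> BB" "snd p \<noteq> []" by (auto simp: VP_ge1_mem)
  have "\<not> contains_rel Z p"
  proof
    assume "contains_rel Z p"
    then obtain r where "r \<in> Z" "sublist (snd r) (snd p)" by (auto simp: contains_rel_def)
    then have "st r \<in> glue_rels Q Z e1 en" "sublist (snd (st r)) (snd (st p))" by (auto simp: glue_rels_def)
    then have "contains_rel (glue_rels Q Z e1 en) (st p)" unfolding contains_rel_def by blast
    with sB(1) show False by (simp add: basis_paths_def)
  qed
  then have "p \<in> BA" using p by (simp add: basis_paths_def)
  then show ?thesis using p sB by (auto simp: VP_ge1_mem is_path_def)
qed

lemma decomp:
  assumes hK: "h \<in> ker_delta0_ge1 QB BB"
  defines "fA \<equiv> (\<lambda>x. if x \<in> VA then h (g (fst x), st (snd x)) else (0::'k::field))"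
    and "z \<equiv> (\<lambda>x. if x \<in> Snsp then h x else 0)"
  shows "fA \<in> ker_delta0_ge1 Q BA \<and> z \<in> supp_on Snsp \<and> h = psi0 Q BA e1 en fA + z"
proof -
  have hs: "h \<in> supp_on VB" and dB: "\<And>a q. delta0 QB BB h (a, q) = 0" using hK by (auto simp: ker_supp)
  have hP: "\<forall>x. x \<notin> VP QB BB \<longrightarrow> h x = 0" using supp_onD[OF hs] VP_ge1_sub by blast
  have fs: "fA \<in> supp_on VA" by (simp add: supp_on_def fA_def)
  have supA: "\<forall>x. x \<notin> VP Q BA \<longrightarrow> fA x = 0" using supp_onD[OF fs] VP_ge1_sub by blast
  have "delta0 Q BA fA (a, q) = 0" for a q
  proof (cases "(a, q) \<in> AP Q BA \<and> snd q \<noteq> []")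
    case False
    then show ?thesis using delta0_eval[OF fin_VPA supA, of a q] by auto
  next
    case True
    then have sq: "snd q \<noteq> []" and apA: "(a, q) \<in> AP Q BA" by auto
    then have q: "q \<in> BA" "a \<in> arrs Q" "fst q = src Q a" "path_end Q q = tgt Q a" by (auto simp: AP_mem)
    have apB: "(a, st q) \<in> AP QB BB" using apA by (rule AP_A_B)
    have E1: "(if last (snd q) = a then fA (fst q, (fst q, butlast (snd q))) else 0)
       = (if last (snd q) = a then h (g (fst q), (g (fst q), butlast (snd q))) else 0)"
    proof (cases "last (snd q) = a")
      case True
      note lf = last_facts[OF q(1) sq True]
      show ?thesis
      proof (cases "(fst q, (fst q, butlast (snd q))) \<in> VA")
        case True then show ?thesis by (simp add: fA_def)
      next
        case False
        then have "(g (fst q), st (fst q, butlast (snd q))) \<notin> VB"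
          using VB_VA[of "(fst q, butlast (snd q))"] lf q by auto
        then show ?thesis using False supp_onD[OF hs] by (simp add: fA_def)
      qed
    qed simp
    have E2: "(if hd (snd q) = a then fA (tgt Q a, (tgt Q a, tl (snd q))) else 0)
       = (if hd (snd q) = a then h (g (tgt Q a), (g (tgt Q a), tl (snd q))) else 0)"
    proof (cases "hd (snd q) = a")
      case True
      note lf = hd_facts[OF q(1) sq True]
      show ?thesis
      proof (cases "(tgt Q a, (tgt Q a, tl (snd q))) \<in> VA")
        case True then show ?thesis by (simp add: fA_def)
      next
        case False
        then have "(g (tgt Q a), st (tgt Q a, tl (snd q))) \<notin> VB"
          using VB_VA[of "(tgt Q a, tl (snd q))"] lf q by auto
        then show ?thesis using False supp_onD[OF hs] by (simp add: fA_def)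
      qed
    qed simp
    show ?thesis using delta0_eval[OF fin_VPA supA, of a q] delta_B_at[OF hP sq apB] dB[of a "st q"] E1 E2 apA sq
      by simp
  qed
  then have fK: "fA \<in> ker_delta0_ge1 Q BA" using fs unfolding ker_supp by blast
  have zs: "z \<in> supp_on Snsp" by (simp add: supp_on_def z_def)
  have "h x = psi0 Q BA e1 en fA x + z x" for x
  proof (cases "x \<in> Snsp")
    case True
    have "x \<notin> (\<lambda>(e,p). (g e, st p)) ` VA" using True disj_Snsp by auto
    then show ?thesis using psi0_out[OF fs] True by (simp add: z_def)
  next
    case nS: False
    then have zx: "z x = 0" by (simp add: z_def)
    show ?thesis
    proof (cases "x \<in> VB")
      case False
      then have "x \<notin> (\<lambda>(e,p). (g e, st p)) ` VA" using psi_VA_VB by auto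
      then show ?thesis using psi0_out[OF fs] False supp_onD[OF hs] zx by simp
    next
      case True
      obtain v q' where x: "x = (v, q')" by (cases x) blast
      from True x have q': "q' \<in> BB" "fst q' = v" "path_end QB q' = v" "snd q' \<noteq> []"
        by (auto simp: VP_ge1_mem)
      from BB_back[OF q'(1) q'(4)] obtain q where q: "q \<in> BA" "st q = q'" by blast
      have sq: "snd q \<noteq> []" using q q' by auto
      have hq: "hdok q" using q(1) BA_path is_path_hdok by blast
      have x2: "x = (g (fst q), st q)" using x q q' by auto
      have ge: "g (path_end Q q) = g (fst q)" using q' q path_end_st[of q] by auto
      show ?thesis
      proof (cases "fst q = path_end Q q")
        case True
        have inA: "(fst q, q) \<in> VA" using VB_VA[of q] BA_path[OF q(1)] True \<open>x \<in> VB\<close> x2 by auto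
        have "psi0 Q BA e1 en fA x = fA (fst q, q)" using psi0_at[OF fs hq] inA x2 by simp
        also have "\<dots> = h x" using inA x2 by (simp add: fA_def)
        finally show ?thesis using zx by simp
      next
        case ne2: False
        with ge g_eqD have ends: "fst q \<in> {e1, en}" "path_end Q q \<in> {e1, en}" by metis+
        have "(fst q, q) \<notin> VA" using ne2 by (auto simp: VP_ge1_mem)
        then have px: "psi0 Q BA e1 en fA x = 0" using psi0_at[OF fs hq] x2 by simp
        have ge1: "g (fst q) = e1" using ends g_e1 by blast
        have nns: "\<not> nonspecial Q Z e1 en q"
        proof
          assume "nonspecial Q Z e1 en q"
          then have "(e1, st q) \<in> Snsp" unfolding Snsp_def by blast
          with nS x2 ge1 show False by simp
        qed
        have endc: "(fst q = e1 \<and> path_end Q q = en) \<or> (fst q = en \<and> path_end Q q = e1)"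
          using ends ne2 by auto
        have qch: "arrow_chain Q (fst q) (snd q)" "fst q \<in> verts Q" using q(1) by (auto simp: basis_paths_def is_path_def)
        have pq: "path_end Q (fst q, snd q) = path_end Q q" by simp
        have "h x = 0"
        proof -
          from nns q(1) endc consider (1) a where "a \<in> arrs Q" "src Q a = path_end Q q" "\<not> contains_rel Z (post_arr a q)"
            | (2) b where "b \<in> arrs Q" "tgt Q b = fst q" "\<not> contains_rel Z (pre_arr Q q b)"
            unfolding nonspecial_def by blast
          then show ?thesis
          proof cases
            case (1 a)
            note a = 1
            define qa where "qa = post_arr a q"
            have qa: "fst qa = fst q" "snd qa = snd q @ [a]" by (auto simp: qa_def post_arr_def)
            have "arrow_chain Q (fst q) (snd q @ [a])" using qch a pq by (simp add: chain_append)
            then have qaB: "qa \<in> BA" using qa qch a(3) unfolding qa_def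
              by (simp add: basis_paths_def is_path_def post_arr_def)
            have peqa: "path_end Q qa = tgt Q a" using qa by (metis path_end_snoc prod.collapse)
            have gsa: "g (src Q a) = e1" using a(2) ends g_e1 by simp
            have apB: "(a, st qa) \<in> AP QB BB" using AP_B_of[OF qaB a(1)] qa ge1 gsa peqa by simp
            have "hd (snd q @ [a]) \<noteq> a"
            proof
              assume "hd (snd q @ [a]) = a"
              then have "hd (snd q) = a" using sq by simp
              then have "fst q = src Q a" using hq sq by (simp add: hdok_def)
              with a(2) ne2 show False by simp
            qed
            then have "delta0 QB BB h (a, st qa) = h (g (fst q), (g (fst q), snd q))"
              using delta_B_at[OF hP _ apB] qa by simp
            then show ?thesis using dB[of a "st qa"] x2 by (simp add: star_def)
          next
            case (2 b)
            note b = 2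
            define qb where "qb = pre_arr Q q b"
            have qb: "fst qb = src Q b" "snd qb = b # snd q" by (auto simp: qb_def pre_arr_def)
            have qbB: "qb \<in> BA" using qb qch b arr_verts unfolding qb_def
              by (simp add: basis_paths_def is_path_def pre_arr_def)
            have peqb: "path_end Q qb = path_end Q q"
              using qb b(2) path_end_Cons[of Q "src Q b" b "snd q"] pq by (metis prod.collapse)
            have gtb: "g (tgt Q b) = e1" using b(2) ends g_e1 by simp
            have ge2: "g (path_end Q q) = e1" using ends g_e1 by simp
            have apB: "(b, st qb) \<in> AP QB BB" using AP_B_of[OF qbB b(1)] qb gtb ge2 peqb by simp
            have "last (b # snd q) \<noteq> b"
            proof
              assume "last (b # snd q) = b"
              then have "last (snd q) = b" using sq by simp
              then have "path_end Q q = tgt Q b" using sq by (simp add: path_end_def)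
              with b(2) ne2 show False by simp
            qed
            then have "delta0 QB BB h (b, st qb) = - h (g (fst q), (g (fst q), snd q))"
              using delta_B_at[OF hP _ apB] qb b(2) by simp
            then show ?thesis using dB[of b "st qb"] x2 by (simp add: star_def)
          qed
        qed
        then show ?thesis using px zx by simp
      qed
    qed
  qed
  then have "h = psi0 Q BA e1 en fA + z" by (simp add: fun_eq_iff)
  then show ?thesis using fK zs by blast
qed

end

lemma delta0_add: "delta0 Q' Bs (f + h) = delta0 Q' Bs f + delta0 Q' Bs (h :: _ \<Rightarrow> 'k::field)"
  by (auto simp: delta0_def fun_eq_iff distrib_right sum.distrib split_def)

lemma ker_add: "f \<in> ker_delta0_ge1 Q' Bs \<Longrightarrow> h \<in> ker_delta0_ge1 Q' Bs \<Longrightarrow> f + h \<in> ker_delta0_ge1 Q' Bs"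
  by (auto simp: ker_delta0_ge1_def delta0_add)

lemma ker_zero: "0 \<in> ker_delta0_ge1 Q' Bs"
  by (auto simp: ker_delta0_ge1_def delta0_def fun_eq_iff split: prod.split)

lemma if_add0: "(if c then a + b else 0) = (if c then a else 0) + (if c then b else (0::'k::field))"
  by simp
lemma if_mult0: "(if c then k * a else 0) = k * (if c then a else (0::'k::field))"
  by simp

lemma psi0_add: "psi0 Q' Bs e1 en (f + h) = psi0 Q' Bs e1 en f + psi0 Q' Bs e1 en (h :: _ \<Rightarrow> 'k::field)"
  by (simp add: psi0_def fun_eq_iff split_def plus_fun_def if_add0 sum.distrib)

lemma psi0_scale: "psi0 Q' Bs e1 en (fscale c f) = fscale c (psi0 Q' Bs e1 en (f :: _ \<Rightarrow> 'k::field))"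
  by (simp add: psi0_def fun_eq_iff split_def fscale_def if_mult0 sum_distrib_left)

lemma psi0_hom: "module_hom fscale fscale (psi0 Q' Bs e1 en :: _ \<Rightarrow> _ \<Rightarrow> 'k::field)"
  unfolding module_hom_iff
  using psi0_add psi0_scale by (auto simp: module_iff_vector_space fscale_vs)

lemma chain_block: "arrow_chain Q v l \<Longrightarrow>
  (v, path_end Q (v, l)) \<in> ({(src Q a, tgt Q a) | a. a \<in> arrs Q} \<union> {(tgt Q a, src Q a) | a. a \<in> arrs Q})\<^sup>*"
proof (induction l arbitrary: v)
  case Nil then show ?case by simp
next
  case (Cons a l)
  let ?R = "{(src Q a, tgt Q a) | a. a \<in> arrs Q} \<union> {(tgt Q a, src Q a) | a. a \<in> arrs Q}"
  from Cons.prems have a: "a \<in> arrs Q" "v = src Q a" "arrow_chain Q (tgt Q a) l" by auto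
  then have st1: "(v, tgt Q a) \<in> ?R" by blast
  have "(tgt Q a, path_end Q (tgt Q a, l)) \<in> ?R\<^sup>*" using Cons.IH a(3) by blast
  from converse_rtrancl_into_rtrancl[OF st1 this] show ?case by (simp add: path_end_Cons)
qed

context GL begin

lemma nsp_block: "nonspecial Q Z e1 en p \<Longrightarrow> same_block Q e1 en"
proof -
  let ?R = "{(src Q a, tgt Q a) | a. a \<in> arrs Q} \<union> {(tgt Q a, src Q a) | a. a \<in> arrs Q}"
  assume p: "nonspecial Q Z e1 en p"
  then have "is_path Q p" by (simp add: nonspecial_def basis_paths_def)
  then have "(fst p, path_end Q p) \<in> ?R\<^sup>*" using chain_block[of Q "fst p" "snd p"] by (simp add: is_path_def)
  moreover have "sym (?R\<^sup>*)" by (rule sym_rtrancl) (auto simp: sym_def)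
  moreover have "(fst p = e1 \<and> path_end Q p = en) \<or> (fst p = en \<and> path_end Q p = e1)"
    using p unfolding nonspecial_def by blast
  ultimately have "(e1, en) \<in> ?R\<^sup>*" by (auto dest: symD)
  then show ?thesis unfolding same_block_def .
qed

lemma ZN_eq: "Z_nsp Q Z e1 en = (supp_on Snsp :: (_ \<Rightarrow> 'k::field) set)"
proof -
  have "{(\<lambda>x. if x = (e1, st p) then 1 else 0) | p. nonspecial Q Z e1 en p} = (ind ` Snsp :: (_ \<Rightarrow> 'k) set)"
    by (auto simp: Snsp_def ind_def)
  then show ?thesis unfolding Z_nsp_def using span_ind[OF fin_Snsp] by simp
qed

lemma card_Snsp: "card Snsp = nsp Q Z e1 en"
proof -
  have "Snsp = (\<lambda>p. (e1, st p)) ` {p. nonspecial Q Z e1 en p}" unfolding Snsp_def by blast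
  moreover have "inj_on (\<lambda>p. (e1, st p)) {p. nonspecial Q Z e1 en p}"
    using Snsp_inj by (auto simp: inj_on_def)
  ultimately show ?thesis by (simp add: nsp_def card_image)
qed

lemma psi_inj: "inj_on (psi0 Q BA e1 en) (supp_on VA :: (_ \<Rightarrow> 'k::field) set)"
proof
  fix f1 f2 :: "_ \<Rightarrow> 'k" assume f: "f1 \<in> supp_on VA" "f2 \<in> supp_on VA"
    and eq: "psi0 Q BA e1 en f1 = psi0 Q BA e1 en f2"
  show "f1 = f2"
  proof
    fix x
    show "f1 x = f2 x"
    proof (cases "x \<in> VA")
      case True
      obtain e p where x: "x = (e, p)" by (cases x) blast
      with True VA_hdok have hp: "hdok p" "e = fst p" by auto
      have "f1 x = psi0 Q BA e1 en f1 (g (fst p), st p)" using psi0_at[OF f(1) hp(1)] True x hp by simp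
      also have "\<dots> = psi0 Q BA e1 en f2 (g (fst p), st p)" using eq by simp
      also have "\<dots> = f2 x" using psi0_at[OF f(2) hp(1)] True x hp by simp
      finally show ?thesis .
    next
      case False then show ?thesis using supp_onD f by metis
    qed
  qed
qed

lemma PA_supp: "f \<in> ker_delta0_ge1 Q BA \<Longrightarrow> psi0 Q BA e1 en f \<in> (supp_on ((\<lambda>(e,p). (g e, st p)) ` VA) :: (_ \<Rightarrow> 'k::field) set)"
  using psi0_out by (auto simp: supp_on_def ker_supp)

lemma supp_disj: "(supp_on ((\<lambda>(e,p). (g e, st p)) ` VA) :: (_ \<Rightarrow> 'k::field) set) \<inter> supp_on Snsp \<subseteq> {0}"
proof
  fix x :: "_ \<Rightarrow> 'k" assume x: "x \<in> supp_on ((\<lambda>(e,p). (g e, st p)) ` VA) \<inter> supp_on Snsp"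
  have "x y = 0" for y
  proof (cases "y \<in> Snsp")
    case True
    then have "y \<notin> (\<lambda>(e,p). (g e, st p)) ` VA" using disj_Snsp by auto
    moreover have "x \<in> supp_on ((\<lambda>(e,p). (g e, st p)) ` VA)" using x by blast
    ultimately show ?thesis by (simp add: supp_onD)
  next
    case False
    moreover have "x \<in> supp_on Snsp" using x by blast
    ultimately show ?thesis by (simp add: supp_onD)
  qed
  then show "x \<in> {0}" by (simp add: fun_eq_iff)
qed

lemma psi0_zero: "psi0 Q' Bs e1 en (0 :: _ \<Rightarrow> 'k::field) = 0"
  by (simp add: psi0_def fun_eq_iff split_def zero_fun_def)

lemma main:
  "((ker_delta0_ge1 QB BB :: (_ \<Rightarrow> 'k::field) set) = {x + y |x y. x \<in> psi0 Q BA e1 en ` ker_delta0_ge1 Q BA \<and> y \<in> Z_nsp Q Z e1 en}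
    \<and> psi0 Q BA e1 en ` ker_delta0_ge1 Q BA \<inter> Z_nsp Q Z e1 en = {0 :: _ \<Rightarrow> 'k})
   \<and> fs.dim (ker_delta0_ge1 QB BB :: (_ \<Rightarrow> 'k) set) = fs.dim (ker_delta0_ge1 Q BA :: (_ \<Rightarrow> 'k) set) + nsp Q Z e1 en"
proof -
  define KA where "KA = (ker_delta0_ge1 Q BA :: (_ \<Rightarrow> 'k) set)"
  define KB where "KB = (ker_delta0_ge1 QB BB :: (_ \<Rightarrow> 'k) set)"
  define psi where "psi = (psi0 Q BA e1 en :: _ \<Rightarrow> _ \<Rightarrow> 'k)"
  define PA where "PA = psi ` KA"
  define ZN where "ZN = (Z_nsp Q Z e1 en :: (_ \<Rightarrow> 'k) set)"
  have ZN': "ZN = supp_on Snsp" unfolding ZN_def by (rule ZN_eq)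
  have S1: "KB = {x + y |x y. x \<in> PA \<and> y \<in> ZN}"
  proof
    show "KB \<subseteq> {x + y |x y. x \<in> PA \<and> y \<in> ZN}"
    proof
      fix h assume "h \<in> KB"
      from decomp[OF this[unfolded KB_def]] show "h \<in> {x + y |x y. x \<in> PA \<and> y \<in> ZN}"
        unfolding PA_def ZN' KA_def psi_def by blast
    qed
    show "{x + y |x y. x \<in> PA \<and> y \<in> ZN} \<subseteq> KB"
      using psi_KB z_KB ker_add unfolding PA_def ZN' KA_def KB_def psi_def by blast
  qed
  have S2: "PA \<inter> ZN = {0}"
  proof
    show "PA \<inter> ZN \<subseteq> {0}"
      using PA_supp supp_disj unfolding PA_def ZN' KA_def psi_def by blast
    have "0 \<in> PA" using psi0_zero ker_zero unfolding PA_def KA_def psi_def by (metis image_eqI)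
    moreover have "0 \<in> ZN" unfolding ZN' by (simp add: supp_on_def)
    ultimately show "{0} \<subseteq> PA \<inter> ZN" by blast
  qed
  have hom: "module_hom fscale fscale psi" unfolding psi_def by (rule psi0_hom)
  have KAs: "KA \<subseteq> supp_on VA" unfolding KA_def by (auto simp: ker_supp)
  have D1: "fs.dim PA = fs.dim KA"
  proof -
    obtain BK where BK: "BK \<subseteq> KA" "fs.independent BK" "KA \<subseteq> fs.span BK" "card BK = fs.dim KA"
      by (rule fs.basis_exists)
    have spBK: "fs.span BK \<subseteq> supp_on VA"
      using BK(1) KAs by (intro fs.span_minimal subspace_supp_on) auto
    have inj: "inj_on psi (fs.span BK)" using psi_inj spBK unfolding psi_def by (rule inj_on_subset)
    have ind: "fs.independent (psi ` BK)"
      by (rule module_hom.independent_injective_image[OF hom BK(2) inj])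
    have "PA \<subseteq> fs.span (psi ` BK)"
      unfolding PA_def module_hom.span_image[OF hom] using BK(3) by blast
    moreover have "psi ` BK \<subseteq> PA" unfolding PA_def using BK(1) by blast
    moreover have "card (psi ` BK) = card BK"
      using inj fs.span_superset by (meson card_image inj_on_subset)
    ultimately show ?thesis using fs.dim_unique[OF _ _ ind] BK(4) by metis
  qed
  have D2: "fs.dim ZN = nsp Q Z e1 en"
  proof -
    have "fs.dim ZN = fs.dim (ind ` Snsp :: (_ \<Rightarrow> 'k) set)"
      unfolding ZN' span_ind[OF fin_Snsp, symmetric] by (rule fs.dim_span)
    also have "\<dots> = card (ind ` Snsp :: (_ \<Rightarrow> 'k) set)" by (rule fs.dim_eq_card_independent[OF indep_ind])
    also have "\<dots> = card Snsp" using inj_ind by (meson card_image inj_on_subset subset_UNIV)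
    finally show ?thesis using card_Snsp by simp
  qed
  have D3: "fs.dim KB = fs.dim PA + fs.dim ZN"
  proof -
    obtain BP where BP: "BP \<subseteq> PA" "fs.independent BP" "PA \<subseteq> fs.span BP" "card BP = fs.dim PA"
      by (rule fs.basis_exists)
    obtain BZ where BZ: "BZ \<subseteq> ZN" "fs.independent BZ" "ZN \<subseteq> fs.span BZ" "card BZ = fs.dim ZN"
      by (rule fs.basis_exists)
    have finVB: "finite VB" using VP_ge1_sub fin_VPB by (rule finite_subset)
    have KBs: "KB \<subseteq> fs.span (ind ` VB)" unfolding span_ind[OF finVB] KB_def by (auto simp: ker_supp)
    have PAK: "PA \<subseteq> KB" using psi_KB unfolding PA_def KA_def KB_def psi_def by blast
    have ZNK: "ZN \<subseteq> KB" using z_KB unfolding ZN' KB_def by blast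
    have finBP: "finite BP" using fs.independent_span_bound[OF finite_imageI[OF finVB] BP(2)] BP(1) PAK KBs by blast
    have finBZ: "finite BZ" using fs.independent_span_bound[OF finite_imageI[OF finVB] BZ(2)] BZ(1) ZNK KBs by blast
    have spP: "fs.span BP \<subseteq> supp_on ((\<lambda>(e,p). (g e, st p)) ` VA)"
      using BP(1) PA_supp unfolding PA_def KA_def psi_def
      by (intro fs.span_minimal subspace_supp_on) blast
    have spZ: "fs.span BZ \<subseteq> supp_on Snsp"
      using BZ(1) unfolding ZN' by (intro fs.span_minimal subspace_supp_on)
    have int: "fs.span BP \<inter> fs.span BZ \<subseteq> {0}" using spP spZ supp_disj by blast
    have indU: "fs.independent (BP \<union> BZ)" by (rule indep_union[OF BP(2) BZ(2) int])
    have disj: "BP \<inter> BZ = {}"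
    proof (rule ccontr)
      assume "BP \<inter> BZ \<noteq> {}"
      then obtain x where x: "x \<in> BP" "x \<in> BZ" by blast
      then have "x \<in> fs.span BP \<inter> fs.span BZ" using fs.span_base by blast
      then have "x = 0" using int by blast
      then show False using x BP(2) fs.dependent_zero by blast
    qed
    have "KB \<subseteq> fs.span (BP \<union> BZ)"
      unfolding fs.span_Un using S1 BP(3) BZ(3) by blast
    moreover have "BP \<union> BZ \<subseteq> KB" using BP(1) BZ(1) PAK ZNK by blast
    moreover have "card (BP \<union> BZ) = card BP + card BZ" using card_Un_disjoint[OF finBP finBZ disj] .
    ultimately show ?thesis using fs.dim_unique[OF _ _ indU] BP(4) BZ(4) by metis
  qed
  show ?thesis using S1 S2 D1 D2 D3 unfolding KA_def KB_def PA_def ZN_def psi_def by simp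
qed

lemma nsp_zero: "\<not> same_block Q e1 en \<Longrightarrow> nsp Q Z e1 en = 0"
  using nsp_block unfolding nsp_def by (metis card.empty empty_Collect_eq)

end

theorem lemma6p2:
  fixes Q :: "('v, 'a) quiver" and Z :: "('v, 'a) path set" and e1 en :: 'v
  assumes "monomial_data Q Z"
    and "e1 \<in> verts Q" and "en \<in> verts Q" and "e1 \<noteq> en"
    and "non_isolated Q e1" and "non_isolated Q en"
  defines "KA \<equiv> (ker_delta0_ge1 Q (basis_paths Q Z) :: ('v \<times> ('v, 'a) path \<Rightarrow> 'k::field) set)"
    and "KB \<equiv> (ker_delta0_ge1 (glue_quiver Q e1 en)
                 (basis_paths (glue_quiver Q e1 en) (glue_rels Q Z e1 en))
               :: ('v \<times> ('v, 'a) path \<Rightarrow> 'k::field) set)"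
    and "PA \<equiv> psi0 Q (basis_paths Q Z) e1 en `
                 (ker_delta0_ge1 Q (basis_paths Q Z) :: ('v \<times> ('v, 'a) path \<Rightarrow> 'k::field) set)"
    and "ZN \<equiv> (Z_nsp Q Z e1 en :: ('v \<times> ('v, 'a) path \<Rightarrow> 'k::field) set)"
  shows "(KB = {x + y | x y. x \<in> PA \<and> y \<in> ZN} \<and> PA \<inter> ZN = {0}) \<and>
         (same_block Q e1 en \<longrightarrow> fdim KB = fdim KA + nsp Q Z e1 en) \<and>
         (\<not> same_block Q e1 en \<longrightarrow> fdim KB = fdim KA)"
proof -
  interpret GL Q Z e1 en using assms(1-4) by unfold_locales
  have M: "((ker_delta0_ge1 (glue_quiver Q e1 en) (basis_paths (glue_quiver Q e1 en) (glue_rels Q Z e1 en)) :: (_ \<Rightarrow> 'k) set)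
      = {x + y |x y. x \<in> psi0 Q (basis_paths Q Z) e1 en ` ker_delta0_ge1 Q (basis_paths Q Z) \<and> y \<in> Z_nsp Q Z e1 en}
    \<and> psi0 Q (basis_paths Q Z) e1 en ` ker_delta0_ge1 Q (basis_paths Q Z) \<inter> Z_nsp Q Z e1 en = {0 :: _ \<Rightarrow> 'k})
   \<and> fdim (ker_delta0_ge1 (glue_quiver Q e1 en) (basis_paths (glue_quiver Q e1 en) (glue_rels Q Z e1 en)) :: (_ \<Rightarrow> 'k) set)
     = fdim (ker_delta0_ge1 Q (basis_paths Q Z) :: (_ \<Rightarrow> 'k) set) + nsp Q Z e1 en"
    by (rule main)
  show ?thesis unfolding KA_def KB_def PA_def ZN_def using M nsp_zero by auto
qed

end
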